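(* Every betweenness algebra $\langle A,f,g\rangle$ is a weak betweenness algebra; in particular it satisfies (ABTW): for all $a\in A$, if $a\neq 0$ then $g(a,a)\leq a$.
   Context: A PS-algebra is $\langle A,f,g\rangle$ where $A$ is a Boolean algebra with at least two elements (operations $+,\cdot,-,0,1$) and $f,g\colon A^2\to A$ satisfy: $f(x,y)=0$ whenever $x=0$ or $y=0$; $f$ is additive in each argument ($f(x+x',y)=f(x,y)+f(x',y)$, $f(x,y+y')=f(x,y)+f(x,y')$); $g(x,y)=1$ whenever $x=0$ or $y=0$; $g$ is co-additive in each argument ($g(x+x',y)=g(x,y)\cdot g(x',y)$, $g(x,y+y')=g(x,y)\cdot g(x,y')$). A betweenness algebra is a PS-algebra satisfying, for all $x,y,z\in A$: (ABT0) $x\leq f(x,x)$; (ABT1$_f$) $f(x,y)\leq f(y,x)$; (ABT1$_g$) $g(x,y)\leq g(y,x)$; (ABT2) $y\cdot f(x,z)\leq f(x\cdot f(x,y),z)$; (ABT3) $f(x,g(x,-y)\cdot y)\leq y$; (wMIA) if $x\neq0$ and $y\neq0$ then $g(x,y)\leq f(x,y)$. A weak betweenness algebra is a PS-algebra satisfying (ABT0), (ABT1$_f$), (ABT1$_g$), (ABT2) and (ABTW): $a\neq0\Rightarrow g(a,a)\leq a$. *)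

theory Defs
  imports Main
begin

text \<open>Boolean algebras are modelled by Isabelle's type class boolean_algebra:
  sum is sup, product is inf, complement is uminus, 0 is bot, 1 is top.
  The requirement of at least two elements is expressed as bot \<noteq> top.\<close>

definition PS_algebra :: "('a::boolean_algebra \<Rightarrow> 'a \<Rightarrow> 'a) \<Rightarrow> ('a \<Rightarrow> 'a \<Rightarrow> 'a) \<Rightarrow> bool" where
  "PS_algebra f g \<longleftrightarrow>
     (bot::'a) \<noteq> top \<and>
     (\<forall>x y. (x = bot \<or> y = bot) \<longrightarrow> f x y = bot) \<and>
     (\<forall>x x' y. f (sup x x') y = sup (f x y) (f x' y)) \<and>
     (\<forall>x y y'. f x (sup y y') = sup (f x y) (f x y')) \<and>
     (\<forall>x y. (x = bot \<or> y = bot) \<longrightarrow> g x y = top) \<and>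
     (\<forall>x x' y. g (sup x x') y = inf (g x y) (g x' y)) \<and>
     (\<forall>x y y'. g x (sup y y') = inf (g x y) (g x y'))"

definition betweenness_algebra :: "('a::boolean_algebra \<Rightarrow> 'a \<Rightarrow> 'a) \<Rightarrow> ('a \<Rightarrow> 'a \<Rightarrow> 'a) \<Rightarrow> bool" where
  "betweenness_algebra f g \<longleftrightarrow>
     PS_algebra f g \<and>
     (\<forall>x. x \<le> f x x) \<and>
     (\<forall>x y. f x y \<le> f y x) \<and>
     (\<forall>x y. g x y \<le> g y x) \<and>
     (\<forall>x y z. inf y (f x z) \<le> f (inf x (f x y)) z) \<and>
     (\<forall>x y. f x (inf (g x (- y)) y) \<le> y) \<and>
     (\<forall>x y. x \<noteq> bot \<and> y \<noteq> bot \<longrightarrow> g x y \<le> f x y)"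

definition weak_betweenness_algebra :: "('a::boolean_algebra \<Rightarrow> 'a \<Rightarrow> 'a) \<Rightarrow> ('a \<Rightarrow> 'a \<Rightarrow> 'a) \<Rightarrow> bool" where
  "weak_betweenness_algebra f g \<longleftrightarrow>
     PS_algebra f g \<and>
     (\<forall>x. x \<le> f x x) \<and>
     (\<forall>x y. f x y \<le> f y x) \<and>
     (\<forall>x y. g x y \<le> g y x) \<and>
     (\<forall>x y z. inf y (f x z) \<le> f (inf x (f x y)) z) \<and>
     (\<forall>a. a \<noteq> bot \<longrightarrow> g a a \<le> a)"

end

theory Submission
  imports Defs
begin

theorem proposition26:
  fixes f g :: "'a::boolean_algebra \<Rightarrow> 'a \<Rightarrow> 'a"
  assumes "betweenness_algebra f g"
  shows "weak_betweenness_algebra f g"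
proof -
  have PS: "PS_algebra f g" using assms unfolding betweenness_algebra_def by (elim conjE) (simp only:)
  have f0': "\<forall>x y. (x = bot \<or> y = bot) \<longrightarrow> f x y = bot" using PS unfolding PS_algebra_def by (elim conjE) assumption
  have f0: "\<And>y. f bot y = bot" using f0' by simp
  have add: "\<And>x x' y. f (sup x x') y = sup (f x y) (f x' y)" using PS unfolding PS_algebra_def by (elim conjE) (simp only:)
  have A2: "\<And>x y z. inf y (f x z) \<le> f (inf x (f x y)) z" using assms unfolding betweenness_algebra_def by (elim conjE) (simp only:)
  have A3: "\<And>x y. f x (inf (g x (- y)) y) \<le> y" using assms unfolding betweenness_algebra_def by (elim conjE) (simp only:)
  have W': "\<forall>x y. x \<noteq> bot \<and> y \<noteq> bot \<longrightarrow> g x y \<le> f x y" using assms unfolding betweenness_algebra_def by (elim conjE) assumption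
  have W: "\<And>x y. x \<noteq> bot \<Longrightarrow> y \<noteq> bot \<Longrightarrow> g x y \<le> f x y" using W' by blast
  have C: "\<And>x y. f x y \<le> f y x" using assms unfolding betweenness_algebra_def by (elim conjE) (simp only:)
  have "g a a \<le> a" if a: "a \<noteq> bot" for a
  proof -
    define b where "b = inf (g a a) (- a)"
    have "b = bot"
    proof (rule ccontr)
      assume nb: "b \<noteq> bot"
      have h1: "f a b \<le> - a" using A3[of a "- a"] by (simp add: b_def)
      have "inf a (f a b) \<le> inf a (- a)" using h1 by (rule inf_mono[OF order_refl])
      hence "inf a (f a b) = bot" by (simp add: bot_unique)
      hence h2: "inf b (f a a) \<le> bot" using A2[of b a a] f0 by simp
      have "b \<le> g a a" by (simp add: b_def)
      also have "\<dots> \<le> f a a" using W a by blast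
      finally have "b \<le> inf b (f a a)" by simp
      with h2 nb show False by (simp add: bot_unique)
    qed
    thus ?thesis unfolding b_def
      by (simp add: inf_shunt)
  qed
  thus ?thesis using assms unfolding betweenness_algebra_def weak_betweenness_algebra_def by blast
qed

end
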